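(* For any finite multisets of formulas $\Pi$ and $\Sigma$, the inference rule $\mathsf{wk}_{\Pi,\Sigma}$: from $\Gamma\Rightarrow\Delta$ infer $\Pi,\Gamma\Rightarrow\Delta,\Sigma$ (for arbitrary $\Gamma,\Delta$) is strongly admissible in $\mathsf{Grz}_\infty+\mathsf{cut}$.
   Context: Formulas are built from $\bot$ and atoms by $\to$ and $\Box$; sequents $\Gamma\Rightarrow\Delta$ have finite multisets of formulas on each side; $\Box\Pi$ denotes $\{\Box B:B\in\Pi\}$. The calculus $\mathsf{Grz}_\infty+\mathsf{cut}$ has initial sequents $\Gamma,p\Rightarrow p,\Delta$ ($p$ atomic), $\Gamma,\bot\Rightarrow\Delta$, and rules $(\to_L)$ from $\Gamma,B\Rightarrow\Delta$ and $\Gamma\Rightarrow A,\Delta$ infer $\Gamma,A\to B\Rightarrow\Delta$; $(\to_R)$ from $\Gamma,A\Rightarrow B,\Delta$ infer $\Gamma\Rightarrow A\to B,\Delta$; $(\mathsf{refl})$ from $\Gamma,B,\Box B\Rightarrow\Delta$ infer $\Gamma,\Box B\Rightarrow\Delta$; $(\Box)$ from left premise $\Gamma,\Box\Pi\Rightarrow A,\Delta$ and right premise $\Box\Pi\Rightarrow A$ infer $\Gamma,\Box\Pi\Rightarrow\Box A,\Delta$; $(\mathsf{cut})$ from $\Gamma\Rightarrow A,\Delta$ and $\Gamma,A\Rightarrow\Delta$ infer $\Gamma\Rightarrow\Delta$. An $\infty$-proof is a possibly infinite tree of sequents built by these rules with leaves labelled by initial sequents, in which every infinite branch passes through a right premise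 of $(\Box)$ infinitely often; $\mathcal P$ is the set of all $\infty$-proofs. The $n$-fragment of an $\infty$-proof is the finite tree obtained by cutting every branch at the $n$-th (from the root) right premise of $(\Box)$; the main fragment is the $1$-fragment; the local height $|\pi|$ is the length of the longest branch of the main fragment (an $\infty$-proof consisting only of an initial sequent has height $0$). Write $\pi\sim_n\tau$ if the $n$-fragments of $\pi,\tau$ coincide, and $\pi\sim_0\tau$ always. $\mathcal P_n$ is the set of $\infty$-proofs with no application of $(\mathsf{cut})$ in their $n$-fragment, and $\mathcal P_0=\mathcal P$. A single-premise rule is strongly admissible in $\mathsf{Grz}_\infty+\mathsf{cut}$ if there is a mapping $\mathsf u:\mathcal P\to\mathcal P$ such that: (i) $\mathsf u$ is non-expansive: $\pi\sim_n\pi'$ implies $\mathsf u(\pi)\sim_n\mathsf u(\pi')$ for all $n$; (ii) $\mathsf u$ is adequate: $\pi\in\mathcal P_n$ implies $\mathsf u(\pi)\in\mathcal P_n$ for all $n$; (iii) $|\mathsf u(\pi)|\le|\pi|$ for all $\pi\in\mathcal P$; (iv) for every instance of the rule, $\mathsf u$ maps every $\infty$-proof of its premise to an $\infty$-proof of its conclusion. *)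

theory Defs
  imports Main "HOL-Library.Multiset" "HOL-Library.Extended_Nat"
begin

datatype fm = Bot | Atom nat | Imp fm fm | Box fm

type_synonym sequent = "fm multiset \<times> fm multiset"

datatype rule = AxAt | AxBot | ImpL | ImpR | Refl | BoxR | Cut

text \<open>A tree of sequents, each node annotated with the rule applied at it;
the list of children is the list of premises (for BoxR and Cut the second
child is the right premise). Trees may be infinite.\<close>

codatatype ptree = PNode (root: sequent) (rl: rule) (subs: "ptree list")

definition rule_ok :: "sequent \<Rightarrow> rule \<Rightarrow> sequent list \<Rightarrow> bool" where
  "rule_ok s r cs \<longleftrightarrow>
    (case r of
      AxAt \<Rightarrow> cs = [] \<and> (\<exists>G D p. s = (G + {#Atom p#}, {#Atom p#} + D))
    | AxBot \<Rightarrow> cs = [] \<and> (\<exists>G D. s = (G + {#Bot#}, D))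
    | ImpL \<Rightarrow> (\<exists>G D A B. s = (G + {#Imp A B#}, D) \<and>
                 cs = [(G + {#B#}, D), (G, {#A#} + D)])
    | ImpR \<Rightarrow> (\<exists>G D A B. s = (G, {#Imp A B#} + D) \<and>
                 cs = [(G + {#A#}, {#B#} + D)])
    | Refl \<Rightarrow> (\<exists>G D B. s = (G + {#Box B#}, D) \<and>
                 cs = [(G + {#B#} + {#Box B#}, D)])
    | BoxR \<Rightarrow> (\<exists>G P A D. s = (G + image_mset Box P, {#Box A#} + D) \<and>
                 cs = [(G + image_mset Box P, {#A#} + D), (image_mset Box P, {#A#})])
    | Cut \<Rightarrow> (\<exists>G D A. s = (G, D) \<and> cs = [(G, {#A#} + D), (G + {#A#}, D)]))"

primrec sub :: "ptree \<Rightarrow> nat list \<Rightarrow> ptree option" where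
  "sub t [] = Some t"
| "sub t (i # p) = (if i < length (subs t) then sub (subs t ! i) p else None)"

definition node :: "ptree \<Rightarrow> nat list \<Rightarrow> ptree" where
  "node t p = the (sub t p)"

definition valid_pos :: "ptree \<Rightarrow> nat list \<Rightarrow> bool" where
  "valid_pos t p \<longleftrightarrow> sub t p \<noteq> None"

definition right_box_step :: "ptree \<Rightarrow> nat list \<Rightarrow> nat \<Rightarrow> bool" where
  "right_box_step t p k \<longleftrightarrow> rl (node t (take k p)) = BoxR \<and> p ! k = 1"

definition is_inf_proof :: "ptree \<Rightarrow> bool" where
  "is_inf_proof t \<longleftrightarrow>
     (\<forall>p. valid_pos t p \<longrightarrow>
        rule_ok (root (node t p)) (rl (node t p)) (map root (subs (node t p))))
   \<and> (\<forall>f :: nat \<Rightarrow> nat. (\<forall>k. valid_pos t (map f [0..<k])) \<longrightarrow>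
        (\<exists>\<^sub>\<infinity>k. rl (node t (map f [0..<k])) = BoxR \<and> f k = 1))"

definition Proofs :: "ptree set" ("\<P>") where
  "\<P> = {t. is_inf_proof t}"

definition cnt :: "ptree \<Rightarrow> nat list \<Rightarrow> nat" where
  "cnt t p = card {k. k < length p \<and> right_box_step t p k}"

text \<open>Nodes with cnt t p = n are leaves of the fragment
(the n-th right premises); nodes with cnt t p < n are internal, i.e. their rule
application belongs to the fragment.\<close>

definition in_frag :: "nat \<Rightarrow> ptree \<Rightarrow> nat list \<Rightarrow> bool" where
  "in_frag n t p \<longleftrightarrow> valid_pos t p \<and> (p = [] \<or> cnt t (butlast p) < n)"

definition frag :: "nat \<Rightarrow> ptree \<Rightarrow> nat list \<Rightarrow> (sequent \<times> rule option) option" where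
  "frag n t p = (if in_frag n t p
                 then Some (root (node t p), if cnt t p < n then Some (rl (node t p)) else None)
                 else None)"

definition sim :: "nat \<Rightarrow> ptree \<Rightarrow> ptree \<Rightarrow> bool" where
  "sim n t t' \<longleftrightarrow> n = 0 \<or> frag n t = frag n t'"

definition local_height :: "ptree \<Rightarrow> enat" where
  "local_height t = (SUP p \<in> {p. in_frag 1 t p}. enat (length p))"

definition cutfree_frag :: "nat \<Rightarrow> ptree \<Rightarrow> bool" where
  "cutfree_frag n t \<longleftrightarrow>
     (\<forall>p. in_frag n t p \<and> cnt t p < n \<longrightarrow> rl (node t p) \<noteq> Cut)"

definition Proofs_n :: "nat \<Rightarrow> ptree set" where
  "Proofs_n n = (if n = 0 then \<P> else {t \<in> \<P>. cutfree_frag n t})"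

text \<open>A single-premise rule is given by the relation R premise conclusion of its instances.\<close>

definition strongly_admissible :: "(sequent \<Rightarrow> sequent \<Rightarrow> bool) \<Rightarrow> bool" where
  "strongly_admissible R \<longleftrightarrow>
     (\<exists>u :: ptree \<Rightarrow> ptree.
        (\<forall>\<pi> \<in> \<P>. u \<pi> \<in> \<P>)
      \<and> (\<forall>n. \<forall>\<pi> \<in> \<P>. \<forall>\<pi>' \<in> \<P>. sim n \<pi> \<pi>' \<longrightarrow> sim n (u \<pi>) (u \<pi>'))
      \<and> (\<forall>n. \<forall>\<pi> \<in> Proofs_n n. u \<pi> \<in> Proofs_n n)
      \<and> (\<forall>\<pi> \<in> \<P>. local_height (u \<pi>) \<le> local_height \<pi>)
      \<and> (\<forall>s s' \<pi>. R s s' \<and> \<pi> \<in> \<P> \<and> root \<pi> = s \<longrightarrow> root (u \<pi>) = s'))"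

definition wk_rule :: "fm multiset \<Rightarrow> fm multiset \<Rightarrow> sequent \<Rightarrow> sequent \<Rightarrow> bool" where
  "wk_rule Pii Sig s s' \<longleftrightarrow> s' = (Pii + fst s, snd s + Sig)"

end

theory Submission
  imports Defs
begin
primcorec wk :: "fm multiset \<Rightarrow> fm multiset \<Rightarrow> ptree \<Rightarrow> ptree" where
 "wk P S t = PNode (P + fst (root t), snd (root t) + S) (rl t)
   (map (\<lambda>(i,c). if rl t = BoxR \<and> i = 1 then c else wk P S c) (zip [0..<length (subs t)] (subs t)))"

lemma wk_len[simp]: "length (subs (wk P S t)) = length (subs t)"
  by simp

lemma wk_nth: "i < length (subs t) \<Longrightarrow>
  subs (wk P S t) ! i = (if rl t = BoxR \<and> i = 1 then subs t ! i else wk P S (subs t ! i))"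
  by simp

lemma rbs_Cons: "i < length (subs t) \<Longrightarrow>
  right_box_step t (i # p) (Suc k) = right_box_step (subs t ! i) p k"
  by (simp add: right_box_step_def node_def)

lemma rbs_0: "right_box_step t (i # p) 0 = (rl t = BoxR \<and> i = 1)"
  by (simp add: right_box_step_def node_def)

lemma cnt_Cons: assumes "i < length (subs t)"
  shows "cnt t (i # p) = (if rl t = BoxR \<and> i = 1 then 1 else 0) + cnt (subs t ! i) p"
proof -
  let ?A = "{k. k < length p \<and> right_box_step (subs t ! i) p k}"
  have eq: "{k. k < length (i#p) \<and> right_box_step t (i # p) k} =
     (if rl t = BoxR \<and> i = 1 then {0} else {}) \<union> Suc ` ?A"
    using assms by (auto simp: rbs_Cons rbs_0 image_iff less_Suc_eq_0_disj)
  have "finite ?A" by simp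
  then show ?thesis unfolding cnt_def eq
    by (auto simp: card_image)
qed

lemma sub_wk: "sub (wk P S t) p = map_option (\<lambda>s. if cnt t p = 0 then wk P S s else s) (sub t p)"
proof (induction p arbitrary: t)
  case Nil
  then show ?case by (simp add: cnt_def)
next
  case (Cons i p)
  show ?case
  proof (cases "i < length (subs t)")
    case True
    show ?thesis
    proof (cases "rl t = BoxR \<and> i = 1")
      case True2: True
      have "sub (subs t ! i) p = None \<or> (\<exists>s. sub (subs t ! i) p = Some s)" by auto
      then show ?thesis using True True2 by (auto simp: cnt_Cons wk_nth simp del: wk.simps)
    next
      case False
      have e: "subs (wk P S t) ! i = wk P S (subs t ! i)" using wk_nth[OF True, of P S] by (simp only: if_not_P[OF False])
      have c: "cnt t (i # p) = cnt (subs t ! i) p" using cnt_Cons[OF True] False by simp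
      show ?thesis using True Cons.IH[of "subs t ! i"] by (simp only: sub.simps e c wk_len if_True)
    qed
  next
    case False
    then show ?thesis by simp
  qed
qed

lemma valid_wk[simp]: "valid_pos (wk P S t) p = valid_pos t p"
  by (simp add: valid_pos_def sub_wk)

lemma rl_node_wk[simp]: "rl (node (wk P S t) p) = rl (node t p)"
  by (cases "sub t p") (auto simp: node_def sub_wk)

lemma rbs_wk[simp]: "right_box_step (wk P S t) p k = right_box_step t p k"
  by (simp add: right_box_step_def)

lemma cnt_wk[simp]: "cnt (wk P S t) p = cnt t p"
  by (simp add: cnt_def)

lemma node_wk: "valid_pos t p \<Longrightarrow> node (wk P S t) p = (if cnt t p = 0 then wk P S (node t p) else node t p)"
  by (auto simp: node_def sub_wk valid_pos_def)

lemma in_frag_wk[simp]: "in_frag n (wk P S t) p = in_frag n t p"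
  by (simp add: in_frag_def)

definition wkn :: "fm multiset \<Rightarrow> fm multiset \<Rightarrow> sequent \<Rightarrow> sequent" where
  "wkn P S q = (P + fst q, snd q + S)"

lemma roots_wk_nonbox: "rl s \<noteq> BoxR \<Longrightarrow> map root (subs (wk P S s)) = map (wkn P S \<circ> root) (subs s)"
  apply (rule nth_equalityI)
   apply (simp only: length_map wk_len)
  apply (simp only: length_map wk_len nth_map wk_nth)
  by (simp add: wkn_def)

lemma roots_wk_box: "rl s = BoxR \<Longrightarrow> subs s = [a, b] \<Longrightarrow> map root (subs (wk P S s)) = [wkn P S (root a), root b]"
  apply (rule nth_equalityI)
   apply (simp only: length_map wk_len length_Cons list.size)
  apply (simp only: length_map wk_len nth_map wk_nth)
  by (auto simp add: wkn_def less_Suc_eq)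

lemma root_wk: "root (wk P S s) = wkn P S (root s)"
  by (simp add: wkn_def)

lemma rule_ok_wk:
  assumes "rule_ok (root s) (rl s) (map root (subs s))"
  shows "rule_ok (root (wk P S s)) (rl (wk P S s)) (map root (subs (wk P S s)))"
proof (cases "rl s")
  case AxAt
  from assms AxAt obtain G D p where r: "root s = (G + {#Atom p#}, {#Atom p#} + D)" and c: "subs s = []"
    by (auto simp: rule_ok_def)
  show ?thesis unfolding rule_ok_def root_wk using AxAt r c
    by (simp add: wkn_def; blast)
next
  case AxBot
  from assms AxBot obtain G D where r: "root s = (G + {#Bot#}, D)" and c: "subs s = []"
    by (auto simp: rule_ok_def)
  show ?thesis unfolding rule_ok_def root_wk using AxBot r c
    by (simp add: wkn_def; blast)
next
  case ImpL
  from assms ImpL obtain G D A B where r: "root s = (G + {#Imp A B#}, D)" and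
    c: "map root (subs s) = [(G + {#B#}, D), (G, {#A#} + D)]"
    by (auto simp: rule_ok_def)
  have m: "map root (subs (wk P S s)) = map (wkn P S) (map root (subs s))"
    using roots_wk_nonbox[of s P S] ImpL by simp
  show ?thesis unfolding rule_ok_def root_wk m c using ImpL r
    by (simp add: wkn_def; blast)
next
  case ImpR
  from assms ImpR obtain G D A B where r: "root s = (G, {#Imp A B#} + D)" and
    c: "map root (subs s) = [(G + {#A#}, {#B#} + D)]"
    by (auto simp: rule_ok_def)
  have m: "map root (subs (wk P S s)) = map (wkn P S) (map root (subs s))"
    using roots_wk_nonbox[of s P S] ImpR by simp
  show ?thesis unfolding rule_ok_def root_wk m c using ImpR r
    by (simp add: wkn_def; blast)
next
  case Refl
  from assms Refl obtain G D B where r: "root s = (G + {#Box B#}, D)" and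
    c: "map root (subs s) = [(G + {#B#} + {#Box B#}, D)]"
    by (auto simp: rule_ok_def)
  have m: "map root (subs (wk P S s)) = map (wkn P S) (map root (subs s))"
    using roots_wk_nonbox[of s P S] Refl by simp
  show ?thesis unfolding rule_ok_def root_wk m c using Refl r
    by (simp add: wkn_def; blast)
next
  case Cut
  from assms Cut obtain G D A where r: "root s = (G, D)" and
    c: "map root (subs s) = [(G, {#A#} + D), (G + {#A#}, D)]"
    by (auto simp: rule_ok_def)
  have m: "map root (subs (wk P S s)) = map (wkn P S) (map root (subs s))"
    using roots_wk_nonbox[of s P S] Cut by simp
  show ?thesis unfolding rule_ok_def root_wk m c using Cut r
    by (simp add: wkn_def; blast)
next
  case BoxR
  from assms BoxR obtain G Q A D where r: "root s = (G + image_mset Box Q, {#Box A#} + D)" and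
    c: "map root (subs s) = [(G + image_mset Box Q, {#A#} + D), (image_mset Box Q, {#A#})]"
    by (auto simp: rule_ok_def)
  from c obtain a b where ab: "subs s = [a, b]" "root a = (G + image_mset Box Q, {#A#} + D)"
     "root b = (image_mset Box Q, {#A#})"
    by (cases "subs s" rule: list.exhaust; cases "tl (subs s)" rule: list.exhaust) auto
  have m: "map root (subs (wk P S s)) = [wkn P S (root a), root b]"
    using roots_wk_box[OF BoxR ab(1)] by simp
  show ?thesis unfolding rule_ok_def root_wk m using BoxR r ab
    apply (simp add: wkn_def)
    apply (rule exI[of _ "P+G"], rule exI[of _ Q])
    by (simp add: ac_simps)
qed

lemma sub_append: "sub t (p @ q) = (case sub t p of None \<Rightarrow> None | Some s \<Rightarrow> sub s q)"
  by (induction p arbitrary: t) auto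

lemma valid_take: "valid_pos t p \<Longrightarrow> valid_pos t (take k p)"
  using sub_append[of t "take k p" "drop k p"]
  by (auto simp: valid_pos_def split: option.splits)

lemma rbs_take: "j < k \<Longrightarrow> right_box_step t (take k p) j = right_box_step t p j"
  by (simp add: right_box_step_def min_def)

lemma cnt_take_mono: assumes "k \<le> m" shows "cnt t (take k p) \<le> cnt t (take m p)"
proof -
  have "{j. j < length (take k p) \<and> right_box_step t (take k p) j} \<subseteq>
        {j. j < length (take m p) \<and> right_box_step t (take m p) j}"
    using assms by (auto simp: rbs_take)
  then show ?thesis unfolding cnt_def by (intro card_mono) auto
qed

lemma in_frag_prefix:
  assumes "in_frag n t p" "k < length p"
  shows "cnt t (take k p) < n \<and> in_frag n t (take k p)"
proof -
  have bl: "butlast p = take (length p - 1) p" by (simp add: butlast_conv_take)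
  have p: "p \<noteq> []" using assms by auto
  have c: "cnt t (butlast p) < n" using assms p by (auto simp: in_frag_def)
  have "k \<le> length p - 1" using assms(2) by simp
  then have c1: "cnt t (take k p) < n"
    using cnt_take_mono[of k "length p - 1" t p] c bl by simp
  have "butlast (take k p) = take (k - 1) p" using assms(2) by (simp add: butlast_conv_take min_def)
  moreover have "cnt t (take (k-1) p) \<le> cnt t (take k p)" by (rule cnt_take_mono) simp
  ultimately show ?thesis using c1 assms valid_take by (auto simp: in_frag_def)
qed

lemma frag_cnt:
  assumes "frag n t = frag n t'" "in_frag n t p"
  shows "cnt t p = cnt t' p"
proof -
  have "right_box_step t p k = right_box_step t' p k" if k: "k < length p" for k
  proof -
    from in_frag_prefix[OF assms(2) k] have a: "cnt t (take k p) < n" "in_frag n t (take k p)" by auto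
    have "frag n t (take k p) = frag n t' (take k p)" using assms(1) by simp
    then have "in_frag n t' (take k p) \<and> cnt t' (take k p) < n \<and> rl (node t (take k p)) = rl (node t' (take k p))"
      using a unfolding frag_def by (auto split: if_splits)
    then show ?thesis by (simp add: right_box_step_def)
  qed
  then have "{k. k < length p \<and> right_box_step t p k} = {k. k < length p \<and> right_box_step t' p k}"
    by auto
  then show ?thesis by (simp add: cnt_def)
qed

lemma frag_wk:
  assumes "frag n t = frag n t'"
  shows "frag n (wk P S t) = frag n (wk P S t')"
proof
  fix p
  have e: "frag n t p = frag n t' p" using assms by simp
  show "frag n (wk P S t) p = frag n (wk P S t') p"
  proof (cases "in_frag n t p")
    case True
    then have T': "in_frag n t' p" using e unfolding frag_def by (auto split: if_splits)
    have c: "cnt t p = cnt t' p" using frag_cnt[OF assms True] .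
    have r: "root (node t p) = root (node t' p)" using e True T' unfolding frag_def by simp
    have l: "cnt t p < n \<Longrightarrow> rl (node t p) = rl (node t' p)" using e True T' c unfolding frag_def by simp
    have v: "valid_pos t p" "valid_pos t' p" using True T' by (auto simp: in_frag_def)
    show ?thesis unfolding frag_def using True T' c r l
      by (simp add: node_wk[OF v(1)] node_wk[OF v(2)] root_wk)
  next
    case False
    then have "\<not> in_frag n t' p" using e unfolding frag_def by (auto split: if_splits)
    then show ?thesis using False unfolding frag_def by simp
  qed
qed

lemma wk_proof: assumes "is_inf_proof t" shows "is_inf_proof (wk P S t)"
  unfolding is_inf_proof_def
proof (intro conjI allI impI)
  fix p assume v: "valid_pos (wk P S t) p"
  then have v': "valid_pos t p" by simp
  have ok: "rule_ok (root (node t p)) (rl (node t p)) (map root (subs (node t p)))"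
    using assms v' by (simp add: is_inf_proof_def)
  show "rule_ok (root (node (wk P S t) p)) (rl (node (wk P S t) p)) (map root (subs (node (wk P S t) p)))"
  proof (cases "cnt t p = 0")
    case True
    then show ?thesis using rule_ok_wk[OF ok, of P S] by (simp only: node_wk[OF v'] True if_True)
  next
    case False
    then show ?thesis using ok by (simp only: node_wk[OF v'] False if_False)
  qed
next
  fix f :: "nat \<Rightarrow> nat"
  assume "\<forall>k. valid_pos (wk P S t) (map f [0..<k])"
  then have "\<forall>k. valid_pos t (map f [0..<k])" by simp
  then have "\<exists>\<^sub>\<infinity>k. rl (node t (map f [0..<k])) = BoxR \<and> f k = 1"
    using assms by (simp add: is_inf_proof_def)
  then show "\<exists>\<^sub>\<infinity>k. rl (node (wk P S t) (map f [0..<k])) = BoxR \<and> f k = 1" by simp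
qed

theorem lemma5p1:
  fixes Pii Sig :: "fm multiset"
  shows "strongly_admissible (wk_rule Pii Sig)"
  unfolding strongly_admissible_def
proof (intro exI[of _ "wk Pii Sig"] conjI ballI allI impI)
  fix \<pi> assume "\<pi> \<in> \<P>"
  then show "wk Pii Sig \<pi> \<in> \<P>" by (simp add: Proofs_def wk_proof)
next
  fix n \<pi> \<pi>' assume "sim n \<pi> \<pi>'"
  then show "sim n (wk Pii Sig \<pi>) (wk Pii Sig \<pi>')"
    unfolding sim_def using frag_wk by blast
next
  fix n \<pi> assume "\<pi> \<in> Proofs_n n"
  then show "wk Pii Sig \<pi> \<in> Proofs_n n"
    by (auto simp: Proofs_n_def Proofs_def wk_proof cutfree_frag_def split: if_splits)
next
  fix \<pi> show "local_height (wk Pii Sig \<pi>) \<le> local_height \<pi>"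
    by (simp add: local_height_def)
next
  fix s s' \<pi> assume "wk_rule Pii Sig s s' \<and> \<pi> \<in> \<P> \<and> root \<pi> = s"
  then show "root (wk Pii Sig \<pi>) = s'" by (auto simp: wk_rule_def)
qed
end
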